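(* Let $G$ be a graph that has a min-max clique covering with simple intersection, and suppose its compressed cliques graph $\mathcal{C}(G)$ has no induced cycles other than $K_3$ (i.e., no induced cycles of length at least $4$). Then $Z_+(G)=|V(G)|-\operatorname{cc}(G)$.
   Context: A clique covering of a graph is a set of cliques such that every edge lies in at least one of them; $\operatorname{cc}(G)$ is its minimum size. A min-max clique covering is a clique covering of size $\operatorname{cc}(G)$ consisting of maximal cliques; it has simple intersection if no three distinct cliques of it share a vertex. Given such a covering $\{C_1,\dots,C_\ell\}$, put $C_{i,j}=C_i\cap C_j$ ($i\ne j$) and $C_{i,i}=C_i\setminus\bigcup_{j\ne i}C_j$; the compressed cliques graph $\mathcal{C}(G)$ has a vertex $v_{i,j}$ for each non-empty $C_{i,j}$ (including $i=j$), with $v_{i,j}\sim v_{i',j'}$ iff $\{i,j\}\cap\{i',j'\}\ne\emptyset$. $Z_+(G)$ is the positive zero forcing number: the minimum size of a set $B$ of initially black vertices such that repeated application of the rule "let $W_1,\dots,W_k$ be the vertex sets of components of $G$ minus the black vertices; a black vertex $u$ whose only white neighbour in the subgraph induced by $W_i\cup(\text{black vertices})$ is $w$ may turn $w$ black" eventually makes all vertices black. *)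

theory Defs
  imports Main
begin

definition graph :: "'a set \<Rightarrow> ('a \<Rightarrow> 'a \<Rightarrow> bool) \<Rightarrow> bool" where
  "graph V E \<longleftrightarrow> finite V \<and> (\<forall>x y. E x y \<longrightarrow> E y x) \<and> (\<forall>x. \<not> E x x)
     \<and> (\<forall>x y. E x y \<longrightarrow> x \<in> V \<and> y \<in> V)"

definition clique :: "'a set \<Rightarrow> ('a \<Rightarrow> 'a \<Rightarrow> bool) \<Rightarrow> 'a set \<Rightarrow> bool" where
  "clique V E C \<longleftrightarrow> C \<subseteq> V \<and> (\<forall>x\<in>C. \<forall>y\<in>C. x \<noteq> y \<longrightarrow> E x y)"

definition maximal_clique :: "'a set \<Rightarrow> ('a \<Rightarrow> 'a \<Rightarrow> bool) \<Rightarrow> 'a set \<Rightarrow> bool" where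
  "maximal_clique V E C \<longleftrightarrow> clique V E C \<and> (\<forall>D. clique V E D \<and> C \<subseteq> D \<longrightarrow> D = C)"

definition clique_covering :: "'a set \<Rightarrow> ('a \<Rightarrow> 'a \<Rightarrow> bool) \<Rightarrow> 'a set set \<Rightarrow> bool" where
  "clique_covering V E \<K> \<longleftrightarrow> finite \<K> \<and> (\<forall>C\<in>\<K>. clique V E C)
     \<and> (\<forall>x y. E x y \<longrightarrow> (\<exists>C\<in>\<K>. x \<in> C \<and> y \<in> C))"

definition cc :: "'a set \<Rightarrow> ('a \<Rightarrow> 'a \<Rightarrow> bool) \<Rightarrow> nat" where
  "cc V E = (LEAST k. \<exists>\<K>. clique_covering V E \<K> \<and> card \<K> = k)"

definition min_max_clique_covering :: "'a set \<Rightarrow> ('a \<Rightarrow> 'a \<Rightarrow> bool) \<Rightarrow> 'a set set \<Rightarrow> bool" where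
  "min_max_clique_covering V E \<K> \<longleftrightarrow> clique_covering V E \<K> \<and> card \<K> = cc V E
     \<and> (\<forall>C\<in>\<K>. maximal_clique V E C)"

definition simple_intersection :: "'a set set \<Rightarrow> bool" where
  "simple_intersection \<K> \<longleftrightarrow> (\<forall>C1\<in>\<K>. \<forall>C2\<in>\<K>. \<forall>C3\<in>\<K>.
     C1 \<noteq> C2 \<and> C1 \<noteq> C3 \<and> C2 \<noteq> C3 \<longrightarrow> C1 \<inter> C2 \<inter> C3 = {})"

definition cpart :: "'a set set \<Rightarrow> 'a set \<Rightarrow> 'a set \<Rightarrow> 'a set" where
  "cpart \<K> C D = (if C = D then C - \<Union>(\<K> - {C}) else C \<inter> D)"

text \<open>Compressed cliques graph: vertices are the unordered pairs {C_i,C_j} (i = j allowed)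
  with C_{i,j} nonempty; two distinct such vertices are adjacent iff the index pairs meet.\<close>
definition ccg_vertices :: "'a set set \<Rightarrow> 'a set set set" where
  "ccg_vertices \<K> = {{C, D} | C D. C \<in> \<K> \<and> D \<in> \<K> \<and> cpart \<K> C D \<noteq> {}}"

definition ccg_edge :: "'a set set \<Rightarrow> 'a set set \<Rightarrow> 'a set set \<Rightarrow> bool" where
  "ccg_edge \<K> p q \<longleftrightarrow> p \<in> ccg_vertices \<K> \<and> q \<in> ccg_vertices \<K> \<and> p \<noteq> q \<and> p \<inter> q \<noteq> {}"

definition has_induced_cycle :: "'b set \<Rightarrow> ('b \<Rightarrow> 'b \<Rightarrow> bool) \<Rightarrow> nat \<Rightarrow> bool" where
  "has_induced_cycle V E k \<longleftrightarrow> (\<exists>xs. length xs = k \<and> distinct xs \<and> set xs \<subseteq> V \<and>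
     (\<forall>i<k. \<forall>j<k. i \<noteq> j \<longrightarrow>
        (E (xs ! i) (xs ! j) \<longleftrightarrow> (j = Suc i mod k \<or> i = Suc j mod k))))"

definition component_in :: "('a \<Rightarrow> 'a \<Rightarrow> bool) \<Rightarrow> 'a set \<Rightarrow> 'a \<Rightarrow> 'a set" where
  "component_in E S x = {y \<in> S. (\<lambda>a b. a \<in> S \<and> b \<in> S \<and> E a b)\<^sup>*\<^sup>* x y}"

definition psd_force_step :: "'a set \<Rightarrow> ('a \<Rightarrow> 'a \<Rightarrow> bool) \<Rightarrow> 'a set \<Rightarrow> 'a set \<Rightarrow> bool" where
  "psd_force_step V E B B' \<longleftrightarrow> (\<exists>u w. u \<in> B \<and> w \<in> V - B \<and>
     {x \<in> component_in E (V - B) w. E u x} = {w} \<and> B' = insert w B)"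

definition psd_forcing_set :: "'a set \<Rightarrow> ('a \<Rightarrow> 'a \<Rightarrow> bool) \<Rightarrow> 'a set \<Rightarrow> bool" where
  "psd_forcing_set V E B \<longleftrightarrow> B \<subseteq> V \<and> (psd_force_step V E)\<^sup>*\<^sup>* B V"

definition Zplus :: "'a set \<Rightarrow> ('a \<Rightarrow> 'a \<Rightarrow> bool) \<Rightarrow> nat" where
  "Zplus V E = (LEAST k. \<exists>B. psd_forcing_set V E B \<and> card B = k)"

end

theory Submission
  imports Defs
begin


lemma sucmod: "i < (k::nat) \<Longrightarrow> Suc i mod k = (if Suc i = k then 0 else Suc i)"
  by (cases "Suc i = k") (simp_all add: mod_less)

lemma mod_facts:
  fixes i j k :: nat
  assumes "i < k" "j < k" "4 \<le> k"
  shows "Suc i mod k < k" and "Suc i mod k \<noteq> i"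
    and "(Suc i mod k = Suc j mod k) \<longleftrightarrow> i = j"
    and "\<not> (i = Suc j mod k \<and> j = Suc i mod k)"
  using assms by (simp_all add: sucmod[OF assms(1)] sucmod[OF assms(2)] split: if_splits)
lemma cycle_to_ccg:
  assumes d: "distinct zs" and l: "length zs \<ge> 4" and s: "set zs \<subseteq> K"
    and adj: "\<forall>i<length zs. zs!i \<inter> zs!(Suc i mod length zs) \<noteq> {}"
  shows "has_induced_cycle (ccg_vertices K) (ccg_edge K) (length zs)"
proof -
  define k where "k = length zs"
  define ys where "ys = map (\<lambda>i. {zs!i, zs!(Suc i mod k)}) [0..<k]"
  have k4: "4 \<le> k" using l k_def by simp
  have ysn: "i < k \<Longrightarrow> ys!i = {zs!i, zs!(Suc i mod k)}" for i by (simp add: ys_def)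
  have zeq: "a < k \<Longrightarrow> b < k \<Longrightarrow> zs!a = zs!b \<longleftrightarrow> a = b" for a b
    using d k_def nth_eq_iff_index_eq by blast
  have inK: "a < k \<Longrightarrow> zs!a \<in> K" for a using s k_def nth_mem by blast
  have vert: "ys!i \<in> ccg_vertices K" if "i < k" for i
  proof -
    have ne: "zs!i \<noteq> zs!(Suc i mod k)" using zeq mod_facts[OF that that k4] that by metis
    have "cpart K (zs!i) (zs!(Suc i mod k)) \<noteq> {}"
      using ne adj that k_def by (simp add: cpart_def)
    then show ?thesis unfolding ccg_vertices_def ysn[OF that]
      using inK that mod_facts[OF that that k4] by blast
  qed
  have key: "ys!i \<inter> ys!j \<noteq> {} \<longleftrightarrow> (i = j \<or> j = Suc i mod k \<or> i = Suc j mod k)"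
    if "i < k" "j < k" for i j
  proof -
    have "ys!i \<inter> ys!j \<noteq> {} \<longleftrightarrow> (zs!i = zs!j \<or> zs!i = zs!(Suc j mod k) \<or> zs!(Suc i mod k) = zs!j
        \<or> zs!(Suc i mod k) = zs!(Suc j mod k))"
      using ysn that by auto
    also have "\<dots> \<longleftrightarrow> (i = j \<or> i = Suc j mod k \<or> Suc i mod k = j \<or> Suc i mod k = Suc j mod k)"
      using zeq that mod_facts[OF that k4] by simp
    also have "\<dots> \<longleftrightarrow> (i = j \<or> j = Suc i mod k \<or> i = Suc j mod k)"
      using mod_facts[OF that k4] by auto
    finally show ?thesis .
  qed
  have dys: "distinct ys"
  proof (subst distinct_conv_nth, intro allI impI)
    fix i j assume ij: "i < length ys" "j < length ys" "i \<noteq> j"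
    hence ij': "i < k" "j < k" by (auto simp: ys_def)
    show "ys!i \<noteq> ys!j"
    proof
      assume eq: "ys!i = ys!j"
      have ne: "zs!i \<noteq> zs!j" using zeq ij' ij(3) by simp
      have "zs!i \<in> ys!j" using eq ysn ij' by auto
      hence "zs!i = zs!(Suc j mod k)" using ne ysn ij' by auto
      hence 1: "i = Suc j mod k" using zeq ij' mod_facts[OF ij'(2) ij'(2) k4] by simp
      have "zs!j \<in> ys!i" using eq ysn ij' by auto
      hence "zs!j = zs!(Suc i mod k)" using ne ysn ij' by auto
      hence 2: "j = Suc i mod k" using zeq ij' mod_facts[OF ij'(1) ij'(1) k4] by simp
      show False using 1 2 mod_facts[OF ij' k4] by blast
    qed
  qed
  show ?thesis unfolding has_induced_cycle_def
  proof (intro exI[of _ ys] conjI allI impI)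
    show "length ys = length zs" by (simp add: ys_def k_def)
    show "distinct ys" by (rule dys)
    show "set ys \<subseteq> ccg_vertices K" using vert by (auto simp: ys_def in_set_conv_nth)
    fix i j assume "i < length zs" "j < length zs" "i \<noteq> j"
    hence ij: "i < k" "j < k" "i \<noteq> j" by (auto simp: k_def)
    have "length ys = k" by (simp add: ys_def)
    then have "ys!i \<noteq> ys!j" using dys ij nth_eq_iff_index_eq by metis
    then show "ccg_edge K (ys ! i) (ys ! j) = (j = Suc i mod length zs \<or> i = Suc j mod length zs)"
      unfolding ccg_edge_def using vert ij key[OF ij(1,2)] k_def by auto
  qed
qed




locale CCL =
  fixes V :: "'a set" and E :: "'a \<Rightarrow> 'a \<Rightarrow> bool" and K :: "'a set set"
  assumes graph: "graph V E"
    and cov: "clique_covering V E K"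
    and maxi: "\<forall>C\<in>K. maximal_clique V E C"
    and si: "simple_intersection K"
    and mincov: "\<And>K'. clique_covering V E K' \<Longrightarrow> card K \<le> card K'"
    and nocyc: "\<And>zs. distinct zs \<Longrightarrow> 4 \<le> length zs \<Longrightarrow> set zs \<subseteq> K \<Longrightarrow>
        (\<forall>i<length zs. zs!i \<inter> zs!(Suc i mod length zs) \<noteq> {}) \<Longrightarrow> False"
begin

lemma finV: "finite V" using graph by (simp add: graph_def)
lemma symE: "E x y \<Longrightarrow> E y x" using graph by (simp add: graph_def)
lemma irrE: "\<not> E x x" using graph by (simp add: graph_def)
lemma finK: "finite K" using cov by (simp add: clique_covering_def)
lemma cliqK: "C \<in> K \<Longrightarrow> clique V E C" using cov by (simp add: clique_covering_def)
lemma subV: "C \<in> K \<Longrightarrow> C \<subseteq> V" using cliqK by (simp add: clique_def)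
lemma finC: "C \<in> K \<Longrightarrow> finite C" using subV finV finite_subset by blast
lemma edgeK: "E x y \<Longrightarrow> \<exists>C\<in>K. x \<in> C \<and> y \<in> C" using cov by (simp add: clique_covering_def)
lemma cliqE: "C \<in> K \<Longrightarrow> x \<in> C \<Longrightarrow> y \<in> C \<Longrightarrow> x \<noteq> y \<Longrightarrow> E x y"
  using cliqK by (simp add: clique_def)
lemma three: "C1 \<in> K \<Longrightarrow> C2 \<in> K \<Longrightarrow> C3 \<in> K \<Longrightarrow> C1 \<noteq> C2 \<Longrightarrow> C1 \<noteq> C3 \<Longrightarrow> C2 \<noteq> C3
   \<Longrightarrow> x \<in> C1 \<Longrightarrow> x \<in> C2 \<Longrightarrow> x \<in> C3 \<Longrightarrow> False"
  using si unfolding simple_intersection_def by blast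

lemma card2: assumes "C \<in> K" shows "2 \<le> card C"
proof (rule ccontr)
  assume c: "\<not> 2 \<le> card C"
  have "clique_covering V E (K - {C})"
    unfolding clique_covering_def
  proof (intro conjI allI impI ballI)
    show "finite (K - {C})" using finK by simp
    show "clique V E D" if "D \<in> K - {C}" for D using that cliqK by simp
    fix x y assume e: "E x y"
    then obtain D where D: "D \<in> K" "x \<in> D" "y \<in> D" using edgeK by blast
    have "x \<noteq> y" using e irrE by metis
    have "D \<noteq> C"
    proof
      assume "D = C"
      then have "{x, y} \<subseteq> C" using D by simp
      then have "card {x,y} \<le> card C" using finC[OF assms] card_mono by blast
      then show False using c \<open>x \<noteq> y\<close> by simp
    qed
    then show "\<exists>C\<in>K - {C}. x \<in> C \<and> y \<in> C" using D by blast
  qed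
  then have "card K \<le> card (K - {C})" by (rule mincov)
  moreover have "card (K - {C}) < card K" using finK assms by (meson card_Diff1_less)
  ultimately show False by simp
qed

definition Hadj :: "'a set \<Rightarrow> 'a set \<Rightarrow> bool" where
  "Hadj C D \<longleftrightarrow> C \<in> K \<and> D \<in> K \<and> C \<noteq> D \<and> C \<inter> D \<noteq> {}"

definition Nn :: "'a set \<Rightarrow> bool" where
  "Nn C \<longleftrightarrow> (\<forall>x\<in>C. \<exists>D\<in>K. D \<noteq> C \<and> x \<in> D)"

definition I1 :: "'a set set \<Rightarrow> bool" where
  "I1 S \<longleftrightarrow> (\<forall>v\<in>K - S. Nn v \<longrightarrow> (\<exists>e\<in>K - S. Hadj v e))"

definition RS :: "'a set set \<Rightarrow> 'a set \<Rightarrow> 'a set \<Rightarrow> bool" where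
  "RS S a b \<longleftrightarrow> a \<in> S \<and> b \<in> S \<and> Hadj a b"

definition I2 :: "'a set set \<Rightarrow> bool" where
  "I2 S \<longleftrightarrow> (\<forall>a\<in>S. \<forall>b\<in>S. Hadj\<^sup>*\<^sup>* a b \<longrightarrow> (RS S)\<^sup>*\<^sup>* a b)"

definition Inv :: "'a set set \<Rightarrow> bool" where
  "Inv S \<longleftrightarrow> S \<subseteq> K \<and> I1 S \<and> I2 S"

definition placeable :: "'a set set \<Rightarrow> 'a set \<Rightarrow> bool" where
  "placeable S C \<longleftrightarrow> C \<in> K - S \<and> (\<exists>u w. u \<in> C \<and> w \<in> C \<and> u \<noteq> w \<and> w \<notin> \<Union>S \<and>
      (\<forall>D\<in>K. u \<in> D \<longrightarrow> D = C \<or> D \<in> S))"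

lemma Hsym: "Hadj C D \<Longrightarrow> Hadj D C" unfolding Hadj_def by blast
lemma HK: "Hadj C D \<Longrightarrow> C \<in> K \<and> D \<in> K" unfolding Hadj_def by blast
lemma Hirr: "\<not> Hadj C C" unfolding Hadj_def by blast

lemma nbr2: assumes "C \<in> K" "Nn C" shows "\<exists>D1 D2. Hadj C D1 \<and> Hadj C D2 \<and> D1 \<noteq> D2"
proof -
  have "C \<noteq> {}" using card2[OF assms(1)] by auto
  then obtain x where x: "x \<in> C" by blast
  then obtain D1 where D1: "D1 \<in> K" "D1 \<noteq> C" "x \<in> D1" using assms(2) Nn_def by blast
  have "\<not> C \<subseteq> D1"
  proof
    assume "C \<subseteq> D1"
    then have "D1 = C" using maxi assms(1) cliqK[OF D1(1)] unfolding maximal_clique_def by blast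
    then show False using D1 by simp
  qed
  then obtain y where y: "y \<in> C" "y \<notin> D1" by blast
  then obtain D2 where D2: "D2 \<in> K" "D2 \<noteq> C" "y \<in> D2" using assms(2) Nn_def by blast
  have "Hadj C D1" "Hadj C D2" unfolding Hadj_def using assms D1 D2 x y by auto
  moreover have "D1 \<noteq> D2" using y D2 by auto
  ultimately show ?thesis by blast
qed

lemma F4:
  assumes c1: "c1 \<in> K" "Nn c1" and h12: "Hadj c1 c2" and h2x: "Hadj c2 x" and xc: "x \<noteq> c1"
    and nb: "\<forall>D. Hadj c1 D \<longrightarrow> D = x \<or> D = c2"
  shows False
proof -
  obtain y where y: "y \<in> c2" "y \<in> x" using h2x Hadj_def by blast
  have K3: "c2 \<in> K" "x \<in> K" using h12 h2x HK by auto
  have ne: "c1 \<noteq> c2" "c2 \<noteq> x" using h12 h2x Hadj_def by auto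
  have yn: "y \<notin> c1" using three[OF c1(1) K3 ne(1) xc[symmetric] ne(2)] y by blast
  have sub: "\<And>a b. a \<in> c1 \<Longrightarrow> b \<in> c2 \<Longrightarrow> b \<in> x \<Longrightarrow> a \<noteq> b \<Longrightarrow> E a b"
  proof -
    fix a b assume a: "a \<in> c1" and b: "b \<in> c2" "b \<in> x" and ab: "a \<noteq> b"
    obtain D where D: "D \<in> K" "D \<noteq> c1" "a \<in> D" using c1(2) a Nn_def by blast
    have "Hadj c1 D" unfolding Hadj_def using D c1 a by blast
    then have "D = x \<or> D = c2" using nb by blast
    then have "b \<in> D" using b by blast
    then show "E a b" using cliqE[OF D(1) D(3)] ab by blast
  qed
  have "clique V E (c1 \<union> (c2 \<inter> x))"
    unfolding clique_def
  proof (intro conjI ballI impI)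
    show "c1 \<union> (c2 \<inter> x) \<subseteq> V" using subV c1 K3 by blast
    fix a b assume a: "a \<in> c1 \<union> (c2 \<inter> x)" and b: "b \<in> c1 \<union> (c2 \<inter> x)" and ab: "a \<noteq> b"
    show "E a b"
    proof (cases "a \<in> c1")
      case True
      show ?thesis
      proof (cases "b \<in> c1")
        case True then show ?thesis using cliqE[OF c1(1)] \<open>a \<in> c1\<close> ab by blast
      next
        case False then show ?thesis using sub \<open>a \<in> c1\<close> b ab by blast
      qed
    next
      case False
      then have a2: "a \<in> c2" "a \<in> x" using a by auto
      show ?thesis
      proof (cases "b \<in> c1")
        case True then show ?thesis using sub[OF True a2] ab symE by metis
      next
        case False then show ?thesis using cliqE[OF K3(1) a2(1)] b ab by blast
      qed
    qed
  qed
  then have "c1 \<union> (c2 \<inter> x) = c1" using maxi c1(1) unfolding maximal_clique_def by blast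
  then show False using y yn by blast
qed

lemma placeableI:
  "C \<in> K - S \<Longrightarrow> u \<in> C \<Longrightarrow> w \<in> C \<Longrightarrow> u \<noteq> w \<Longrightarrow> w \<notin> \<Union>S \<Longrightarrow>
   (\<And>D. D \<in> K \<Longrightarrow> u \<in> D \<Longrightarrow> D = C \<or> D \<in> S) \<Longrightarrow> placeable S C"
  unfolding placeable_def by blast

lemma place_P:
  assumes CS: "C \<in> K - S" and SK: "S \<subseteq> K" and nN: "\<not> Nn C" shows "placeable S C"
proof -
  obtain p where p: "p \<in> C" "\<And>D. D \<in> K \<Longrightarrow> D \<noteq> C \<Longrightarrow> p \<notin> D" using nN unfolding Nn_def by blast
  have CK: "C \<in> K" using CS by simp
  have "card C \<ge> 2" using card2 CK by blast
  then have "card (C - {p}) \<ge> 1" using p(1) finC[OF CK] by simp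
  then have "C - {p} \<noteq> {}" by (metis card.empty not_one_le_zero)
  then obtain x where x: "x \<in> C" "x \<noteq> p" by blast
  have pS: "p \<notin> \<Union>S"
  proof
    assume "p \<in> \<Union>S"
    then obtain D where "D \<in> S" "p \<in> D" by blast
    then show False using p(2)[of D] SK CS by blast
  qed
  show ?thesis
  proof (cases "x \<in> \<Union>S")
    case False
    show ?thesis
    proof (rule placeableI[OF CS p(1) x(1) x(2)[symmetric] False])
      fix D assume "D \<in> K" "p \<in> D" then show "D = C \<or> D \<in> S" using p(2) by blast
    qed
  next
    case True
    then obtain D0 where D0: "D0 \<in> S" "x \<in> D0" by blast
    have D0K: "D0 \<in> K" using D0 SK by blast
    have "D0 \<noteq> C" using D0 CS by blast
    show ?thesis
    proof (rule placeableI[OF CS x(1) p(1) x(2) pS])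
      fix D assume DK: "D \<in> K" and xD: "x \<in> D"
      show "D = C \<or> D \<in> S"
      proof (rule ccontr)
        assume "\<not> (D = C \<or> D \<in> S)"
        then have "D \<noteq> C" "D \<noteq> D0" using D0 by auto
        then show False using three[OF CK D0K DK \<open>D0 \<noteq> C\<close>[symmetric]] x(1) D0(2) xD by blast
      qed
    qed
  qed
qed

lemma place_N:
  assumes C: "C \<in> K - S" and SK: "S \<subseteq> K" and s: "s \<in> S" "Hadj C s" and e: "e \<in> K - S" "Hadj C e"
  shows "placeable S C"
proof -
  obtain u where u: "u \<in> C" "u \<in> s" using s(2) unfolding Hadj_def by blast
  obtain w where w: "w \<in> C" "w \<in> e" using e(2) unfolding Hadj_def by blast
  have sK: "s \<in> K" using s SK by blast
  have CK: "C \<in> K" "e \<in> K" using C e by auto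
  have ne: "C \<noteq> s" "C \<noteq> e" "s \<noteq> e" using s e C unfolding Hadj_def by auto
  have uw: "u \<noteq> w" using three[OF CK(1) sK CK(2) ne] u w by blast
  have wS: "w \<notin> \<Union>S"
  proof
    assume "w \<in> \<Union>S"
    then obtain D where D: "D \<in> S" "w \<in> D" by blast
    then have "D \<noteq> C" "D \<noteq> e" "D \<in> K" using C e SK by auto
    then show False using three[OF CK(1) CK(2) \<open>D \<in> K\<close> ne(2)] w D(2) by blast
  qed
  show ?thesis
  proof (rule placeableI[OF C u(1) w(1) uw wS])
    fix D assume "D \<in> K" "u \<in> D"
    then show "D = C \<or> D \<in> S" using three[OF CK(1) sK \<open>D \<in> K\<close> ne(1)] u s(1) by blast
  qed
qed

end



context CCL begin

lemma nocyc2: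
  assumes "distinct zs" "4 \<le> length zs" "set zs \<subseteq> K" "successively Hadj zs" "Hadj (last zs) (hd zs)"
  shows False
proof (rule nocyc[OF assms(1-3)], intro allI impI)
  fix i assume i: "i < length zs"
  have ne: "zs \<noteq> []" using assms(2) by auto
  show "zs ! i \<inter> zs ! (Suc i mod length zs) \<noteq> {}"
  proof (cases "Suc i < length zs")
    case True
    then have "Hadj (zs!i) (zs!Suc i)" using assms(4) successively_nth by blast
    then show ?thesis using True by (simp add: Hadj_def)
  next
    case False
    then have "Suc i = length zs" using i by simp
    then have ii: "i = length zs - 1" by simp
    then have "zs!i = last zs" "zs ! (Suc i mod length zs) = hd zs"
      using ne \<open>Suc i = length zs\<close> by (simp_all add: last_conv_nth hd_conv_nth)
    then show ?thesis using assms(5) by (simp add: Hadj_def)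
  qed
qed

lemma path_ex:
  assumes "(RS S)\<^sup>*\<^sup>* a b" "a \<in> S"
  shows "\<exists>ps. ps \<noteq> [] \<and> hd ps = a \<and> last ps = b \<and> distinct ps \<and> set ps \<subseteq> S \<and> successively Hadj ps"
  using assms
proof (induction rule: rtranclp_induct)
  case base
  then show ?case by (intro exI[of _ "[a]"]) simp
next
  case (step b c)
  then obtain ps where ps: "ps \<noteq> []" "hd ps = a" "last ps = b" "distinct ps" "set ps \<subseteq> S" "successively Hadj ps"
    by blast
  have bc: "Hadj b c" "c \<in> S" using step(2) by (auto simp: RS_def)
  show ?case
  proof (cases "c \<in> set ps")
    case True
    then obtain ys zs where sp: "ps = ys @ c # zs" by (meson split_list)
    have "successively Hadj (ys @ [c])"
      using ps(6) unfolding sp by (auto simp: successively_append_iff)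
    moreover have "hd (ys @ [c]) = a" using ps(2) sp by (cases ys) auto
    moreover have "distinct (ys @ [c])" using ps(4) sp by simp
    moreover have "set (ys @ [c]) \<subseteq> S" using ps(5) sp by auto
    ultimately show ?thesis by (intro exI[of _ "ys @ [c]"]) simp
  next
    case False
    have "successively Hadj (ps @ [c])"
      using ps(6) ps(1) ps(3) bc by (simp add: successively_append_iff)
    moreover have "hd (ps @ [c]) = a" using ps by simp
    ultimately show ?thesis using ps False bc by (intro exI[of _ "ps @ [c]"]) simp
  qed
qed

lemma cyc2:
  assumes SK: "S \<subseteq> K" and i2: "I2 S" and c: "c1 \<in> K - S" "c2 \<in> K - S" "Hadj c1 c2"
    and ab: "a \<in> S" "b \<in> S" "Hadj c1 a" "Hadj c2 b" "a \<noteq> b"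
  shows False
proof -
  have "Hadj\<^sup>*\<^sup>* a b"
  proof -
    have "Hadj a c1" "Hadj c1 c2" "Hadj c2 b" using ab c Hsym by auto
    then show ?thesis by (meson converse_rtranclp_into_rtranclp r_into_rtranclp)
  qed
  then have "(RS S)\<^sup>*\<^sup>* a b" using i2 ab unfolding I2_def by blast
  then obtain ps where ps: "ps \<noteq> []" "hd ps = a" "last ps = b" "distinct ps" "set ps \<subseteq> S" "successively Hadj ps"
    using path_ex ab(1) by blast
  have l2: "length ps \<ge> 2"
  proof (cases ps)
    case Nil then show ?thesis using ps(1) by simp
  next
    case (Cons x xs)
    show ?thesis
    proof (cases xs)
      case Nil then show ?thesis using Cons ps ab(5) by simp
    next
      case (Cons y ys) then show ?thesis using \<open>ps = x # xs\<close> by simp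
    qed
  qed
  define zs where "zs = c1 # ps @ [c2]"
  have c12: "c1 \<noteq> c2" using c(3) Hirr by blast
  show False
  proof (rule nocyc2[of zs])
    show "distinct zs" unfolding zs_def using ps c c12 by auto
    show "4 \<le> length zs" unfolding zs_def using l2 by simp
    show "set zs \<subseteq> K" unfolding zs_def using ps c SK by auto
    show "successively Hadj zs" unfolding zs_def
      using ps ab c by (simp add: successively_append_iff successively_Cons Hsym)
    show "Hadj (last zs) (hd zs)" unfolding zs_def using c Hsym by simp
  qed
qed

lemma RS_mono: "(RS S)\<^sup>*\<^sup>* a b \<Longrightarrow> (RS (insert c S))\<^sup>*\<^sup>* a b"
proof -
  assume h: "(RS S)\<^sup>*\<^sup>* a b"
  have "RS S \<le> RS (insert c S)" by (auto simp: RS_def)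
  then show ?thesis using h rtranclp_mono by blast
qed

lemma Hrt_sym: "Hadj\<^sup>*\<^sup>* a b \<Longrightarrow> Hadj\<^sup>*\<^sup>* b a"
proof -
  have "symp Hadj" using Hsym by (auto intro: sympI)
  then have "symp Hadj\<^sup>*\<^sup>*" by (rule symp_rtranclp)
  then show "Hadj\<^sup>*\<^sup>* a b \<Longrightarrow> Hadj\<^sup>*\<^sup>* b a" by (meson sympD)
qed

lemma I2_ins_adj:
  assumes i2: "I2 S" and cs: "c \<notin> S" and s: "s \<in> S" "Hadj c s"
  shows "I2 (insert c S)"
  unfolding I2_def
proof (intro ballI impI)
  fix a b assume a: "a \<in> insert c S" and b: "b \<in> insert c S" and h: "Hadj\<^sup>*\<^sup>* a b"
  have stepcs: "RS (insert c S) c s" "RS (insert c S) s c" using s Hsym by (auto simp: RS_def)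
  show "(RS (insert c S))\<^sup>*\<^sup>* a b"
  proof (cases "a = c")
    case ac: True
    show ?thesis
    proof (cases "b = c")
      case True then show ?thesis using ac by simp
    next
      case False
      then have bS: "b \<in> S" using b by simp
      have "Hadj\<^sup>*\<^sup>* s b" using h ac s(2) Hsym by (meson converse_rtranclp_into_rtranclp)
      then have "(RS S)\<^sup>*\<^sup>* s b" using i2 s(1) bS unfolding I2_def by blast
      then have "(RS (insert c S))\<^sup>*\<^sup>* s b" by (rule RS_mono)
      then show ?thesis using ac stepcs(1) by (meson converse_rtranclp_into_rtranclp)
    qed
  next
    case anc: False
    then have aS: "a \<in> S" using a by simp
    show ?thesis
    proof (cases "b = c")
      case True
      have "Hadj\<^sup>*\<^sup>* a s" using h True s(2) by (meson rtranclp.rtrancl_into_rtrancl)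
      then have "(RS S)\<^sup>*\<^sup>* a s" using i2 s(1) aS unfolding I2_def by blast
      then have "(RS (insert c S))\<^sup>*\<^sup>* a s" by (rule RS_mono)
      then show ?thesis using True stepcs(2) by (meson rtranclp.rtrancl_into_rtrancl)
    next
      case False
      then have "b \<in> S" using b by simp
      then have "(RS S)\<^sup>*\<^sup>* a b" using i2 aS h unfolding I2_def by blast
      then show ?thesis by (rule RS_mono)
    qed
  qed
qed

lemma leave:
  assumes "Hadj\<^sup>*\<^sup>* a b" "a \<in> S" "b \<notin> S"
  shows "\<exists>x\<in>S. \<exists>y. y \<notin> S \<and> Hadj x y"
  using assms by (induction rule: rtranclp_induct) blast+

lemma Closed:
  assumes inv: "Inv S" and r: "r \<in> K - S" and nc: "\<not> (\<exists>c\<in>K - S. \<exists>s\<in>S. Hadj c s)"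
  shows "Inv (insert r S)"
proof -
  have SK: "S \<subseteq> K" and i1: "I1 S" and i2: "I2 S" using inv by (auto simp: Inv_def)
  have nc': "\<And>x y. x \<in> S \<Longrightarrow> Hadj x y \<Longrightarrow> y \<in> S"
  proof (rule ccontr)
    fix x y assume "x \<in> S" "Hadj x y" "y \<notin> S"
    then show False using nc HK Hsym by blast
  qed
  have "I1 (insert r S)" unfolding I1_def
  proof (intro ballI impI)
    fix v assume v: "v \<in> K - insert r S" and nv: "Nn v"
    obtain D1 D2 where D: "Hadj v D1" "Hadj v D2" "D1 \<noteq> D2" using nbr2[of v] v nv by blast
    have "D1 \<notin> S" "D2 \<notin> S" using D nc v Hsym nc' by blast+
    moreover have "D1 \<in> K" "D2 \<in> K" using D HK by auto
    ultimately show "\<exists>e\<in>K - insert r S. Hadj v e" using D by blast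
  qed
  moreover have "I2 (insert r S)" unfolding I2_def
  proof (intro ballI impI)
    fix a b assume a: "a \<in> insert r S" and b: "b \<in> insert r S" and h: "Hadj\<^sup>*\<^sup>* a b"
    show "(RS (insert r S))\<^sup>*\<^sup>* a b"
    proof (cases "a \<in> S")
      case aS: True
      show ?thesis
      proof (cases "b \<in> S")
        case True
        then show ?thesis using i2 aS h RS_mono unfolding I2_def by blast
      next
        case False
        then show ?thesis using leave[OF h aS] nc' by blast
      qed
    next
      case aS: False
      then have ar: "a = r" using a by simp
      show ?thesis
      proof (cases "b \<in> S")
        case True
        then show ?thesis using leave[OF Hrt_sym[OF h] True] aS nc' by blast
      next
        case False
        then show ?thesis using b ar by simp
      qed
    qed
  qed
  ultimately show ?thesis using SK r by (auto simp: Inv_def)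
qed

end



context CCL begin

lemma G:
  assumes inv: "Inv S" and c0: "c0 \<in> K - S" "s0 \<in> S" "Hadj c0 s0"
  shows "\<exists>c\<in>K - S. (\<exists>s\<in>S. Hadj c s) \<and> Inv (insert c S)"
proof (rule ccontr)
  assume nex: "\<not> ?thesis"
  have SK: "S \<subseteq> K" and i1: "I1 S" and i2: "I2 S" using inv by (auto simp: Inv_def)
  define Cand where "Cand = {c \<in> K - S. \<exists>s\<in>S. Hadj c s}"
  have strand: "\<exists>v. v \<in> Cand \<and> v \<noteq> c \<and> Nn v \<and> Hadj v c \<and> (\<forall>e. Hadj v e \<longrightarrow> e = c \<or> e \<in> S)"
    if cC: "c \<in> Cand" for c
  proof -
    obtain s where s: "s \<in> S" "Hadj c s" and cK: "c \<in> K - S" using cC Cand_def by blast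
    have "I2 (insert c S)" using I2_ins_adj[OF i2 _ s] cK by blast
    moreover have "insert c S \<subseteq> K" using SK cK by blast
    moreover have "\<not> Inv (insert c S)" using nex cK s by blast
    ultimately have "\<not> I1 (insert c S)" by (auto simp: Inv_def)
    then obtain v where v: "v \<in> K - insert c S" "Nn v" and nov: "\<not> (\<exists>e\<in>K - insert c S. Hadj v e)"
      unfolding I1_def by blast
    have nb: "\<forall>e. Hadj v e \<longrightarrow> e = c \<or> e \<in> S" using nov HK by blast
    obtain e where e: "e \<in> K - S" "Hadj v e" using i1 v unfolding I1_def by blast
    have "e = c" using nb e by blast
    then have vc: "Hadj v c" using e by simp
    obtain D1 D2 where D: "Hadj v D1" "Hadj v D2" "D1 \<noteq> D2" using nbr2[of v] v by blast
    have "\<exists>s\<in>S. Hadj v s" using D nb by metis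
    then have "v \<in> Cand" using v Cand_def by blast
    then show ?thesis using v vc nb by blast
  qed
  then have exf: "\<forall>c\<in>Cand. \<exists>v. v \<in> Cand \<and> v \<noteq> c \<and> Nn v \<and> Hadj v c \<and> (\<forall>e. Hadj v e \<longrightarrow> e = c \<or> e \<in> S)"
    by blast
  obtain f where f0: "\<forall>c\<in>Cand. f c \<in> Cand \<and> f c \<noteq> c \<and> Nn (f c) \<and> Hadj (f c) c \<and>
      (\<forall>e. Hadj (f c) e \<longrightarrow> e = c \<or> e \<in> S)" using bchoice[OF exf] by blast
  have f: "f c \<in> Cand" "f c \<noteq> c" "Nn (f c)" "Hadj (f c) c" "\<forall>e. Hadj (f c) e \<longrightarrow> e = c \<or> e \<in> S"
    if "c \<in> Cand" for c using f0 that by auto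
  have c0C: "c0 \<in> Cand" using c0 Cand_def by blast
  define c1 where "c1 = f c0"
  define c2 where "c2 = f c1"
  define c3 where "c3 = f c2"
  have c1C: "c1 \<in> Cand" unfolding c1_def by (rule f(1)[OF c0C])
  have c2C: "c2 \<in> Cand" unfolding c2_def by (rule f(1)[OF c1C])
  have f1: "c2 \<noteq> c1" "Nn c2" "Hadj c2 c1" "\<forall>e. Hadj c2 e \<longrightarrow> e = c1 \<or> e \<in> S"
    unfolding c2_def using f[OF c1C] by auto
  have f2: "c3 \<in> Cand" "Hadj c3 c2" "\<forall>e. Hadj c3 e \<longrightarrow> e = c2 \<or> e \<in> S"
    unfolding c3_def using f[OF c2C] by auto
  have c3S: "c3 \<notin> S" using f2(1) Cand_def by blast
  have "Hadj c2 c3" using f2(2) Hsym by blast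
  then have "c3 = c1" using f1(4) c3S by blast
  then have nb1: "\<forall>e. Hadj c1 e \<longrightarrow> e = c2 \<or> e \<in> S" and n1: "Nn c1" using f2(3) f(3)[OF c2C] c3_def by auto
  have c1K: "c1 \<in> K - S" "c2 \<in> K - S" using c1C c2C Cand_def by auto
  obtain D1 D2 where D: "Hadj c2 D1" "Hadj c2 D2" "D1 \<noteq> D2" using nbr2[of c2] f1 c1K by blast
  obtain b where b: "b \<in> S" "Hadj c2 b"
  proof (cases "D1 = c1")
    case True
    then have "D2 \<in> S" using D f1(4) by blast
    then show ?thesis using that D by blast
  next
    case False
    then have "D1 \<in> S" using D f1(4) by blast
    then show ?thesis using that D by blast
  qed
  have h12: "Hadj c1 c2" using f1(3) by (rule Hsym)
  have allb: "\<forall>a. a \<in> S \<longrightarrow> Hadj c1 a \<longrightarrow> a = b"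
  proof (intro allI impI, rule ccontr)
    fix a assume a: "a \<in> S" "Hadj c1 a" "a \<noteq> b"
    show False by (rule cyc2[OF SK i2 c1K(1) c1K(2) h12 a(1) b(1) a(2) b(2) a(3)])
  qed
  show False
  proof (rule F4[of c1 c2 b])
    show "c1 \<in> K" using c1K by simp
    show "Nn c1" by (rule n1)
    show "Hadj c1 c2" using f1(3) Hsym by blast
    show "Hadj c2 b" by (rule b(2))
    show "b \<noteq> c1" using b c1K by blast
    show "\<forall>D. Hadj c1 D \<longrightarrow> D = b \<or> D = c2" using nb1 allb by blast
  qed
qed

lemma step_ex:
  assumes inv: "Inv S" and T: "K - S \<noteq> {}" and ex: "\<exists>r\<in>K - S. \<not> Nn r"
  shows "\<exists>c. placeable S c \<and> Inv (insert c S)"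
proof (cases "\<exists>c\<in>K - S. \<exists>s\<in>S. Hadj c s")
  case True
  then obtain c0 s0 where "c0 \<in> K - S" "s0 \<in> S" "Hadj c0 s0" by blast
  then obtain c s where c: "c \<in> K - S" "s \<in> S" "Hadj c s" "Inv (insert c S)" using G[OF inv] by blast
  have SK: "S \<subseteq> K" using inv Inv_def by blast
  have "placeable S c"
  proof (cases "Nn c")
    case True
    then obtain e where "e \<in> K - S" "Hadj c e" using inv c unfolding Inv_def I1_def by blast
    then show ?thesis using place_N[OF c(1) SK c(2,3)] by blast
  next
    case False then show ?thesis using place_P[OF c(1) SK] by blast
  qed
  then show ?thesis using c by blast
next
  case False
  obtain r where r: "r \<in> K - S" "\<not> Nn r" using ex by blast
  have SK: "S \<subseteq> K" using inv Inv_def by blast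
  show ?thesis using Closed[OF inv r(1) False] place_P[OF r(1) SK r(2)] by blast
qed

lemma NoClosedN:
  assumes "Inv S" "K - S \<subseteq> {C. Nn C}"
  shows "K - S = {}"
  using assms
proof (induction "card (K - S)" arbitrary: S rule: less_induct)
  case less
  show ?case
  proof (rule ccontr)
    assume T: "K - S \<noteq> {}"
    obtain c where c: "c \<in> K - S" "Inv (insert c S)"
    proof (cases "\<exists>c\<in>K - S. \<exists>s\<in>S. Hadj c s")
      case True
      then obtain c0 s0 where cs0: "c0 \<in> K - S" "s0 \<in> S" "Hadj c0 s0" by blast
      obtain c where "c \<in> K - S" "Inv (insert c S)" using G[OF less.prems(1) cs0] by blast
      then show ?thesis by (rule that)
    next
      case False
      obtain r where r: "r \<in> K - S" using T by blast
      show ?thesis using r Closed[OF less.prems(1) r False] by (rule that)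
    qed
    have lt: "card (K - insert c S) < card (K - S)"
      proof -
      have "K - insert c S = (K - S) - {c}" by blast
      moreover have "finite (K - S)" using finK by simp
      ultimately show ?thesis using card_Diff1_less c(1) by metis
    qed
    have "K - insert c S \<subseteq> {C. Nn C}" using less.prems(2) by blast
    then have "K - insert c S = {}" using less.hyps[OF lt c(2)] by blast
    then have KS: "K - S = {c}" using c(1) by blast
    have "Nn c" using less.prems(2) c(1) by blast
    moreover have "I1 S" using less.prems(1) Inv_def by blast
    ultimately obtain e where e: "e \<in> K - S" "Hadj c e" using c(1) unfolding I1_def by blast
    have "e = c" using e(1) KS by simp
    then show False using e(2) Hirr by simp
  qed
qed

lemma Order:
  assumes "Inv S"
  shows "\<exists>cs. distinct cs \<and> set cs = K - S \<and> (\<forall>i<length cs. placeable (S \<union> set (take i cs)) (cs!i))"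
  using assms
proof (induction "card (K - S)" arbitrary: S rule: less_induct)
  case less
  show ?case
  proof (cases "K - S = {}")
    case True
    then show ?thesis by (intro exI[of _ "[]"]) simp
  next
    case False
    have "\<exists>r\<in>K - S. \<not> Nn r" using NoClosedN[OF less.prems] False by blast
    then obtain c where c: "placeable S c" "Inv (insert c S)" using step_ex[OF less.prems False] by blast
    have cKS: "c \<in> K - S" using c(1) placeable_def by blast
    have lt: "card (K - insert c S) < card (K - S)"
      proof -
      have "K - insert c S = (K - S) - {c}" by blast
      moreover have "finite (K - S)" using finK by simp
      ultimately show ?thesis using card_Diff1_less cKS by metis
    qed
    obtain cs where cs: "distinct cs" "set cs = K - insert c S"
      "\<forall>i<length cs. placeable (insert c S \<union> set (take i cs)) (cs!i)"
      using less.hyps[OF lt c(2)] by blast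
    show ?thesis
    proof (intro exI[of _ "c # cs"] conjI allI impI)
      show "distinct (c # cs)" using cs by simp
      show "set (c # cs) = K - S" using cs cKS by auto
      fix i assume i: "i < length (c # cs)"
      show "placeable (S \<union> set (take i (c # cs))) ((c # cs) ! i)"
      proof (cases i)
        case 0 then show ?thesis using c(1) by simp
      next
        case (Suc j)
        then have "j < length cs" using i by simp
        then have "placeable (insert c S \<union> set (take j cs)) (cs!j)" using cs(3) by blast
        moreover have "S \<union> set (take i (c # cs)) = insert c S \<union> set (take j cs)" using Suc by simp
        ultimately show ?thesis using Suc by simp
      qed
    qed
  qed
qed

end



lemma clqE: "clique V E C \<Longrightarrow> a \<in> C \<Longrightarrow> b \<in> C \<Longrightarrow> a \<noteq> b \<Longrightarrow> E a b"
  by (simp add: clique_def)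

lemma lb_run:
  assumes g: "graph V E" and cv: "clique_covering V E K"
    and run: "(psd_force_step V E)\<^sup>*\<^sup>* B B'" and BV: "B \<subseteq> V"
  shows "\<exists>U\<subseteq>K. \<Union>U \<subseteq> B' \<and> card B' \<le> card B + card U \<and> B' \<subseteq> V"
  using run
proof (induction rule: rtranclp_induct)
  case base
  then show ?case using BV by (intro exI[of _ "{}"]) auto
next
  case (step B1 B2)
  then obtain U where U: "U \<subseteq> K" "\<Union>U \<subseteq> B1" "card B1 \<le> card B + card U" "B1 \<subseteq> V" by blast
  obtain u w where uw: "u \<in> B1" "w \<in> V - B1" "{x \<in> component_in E (V - B1) w. E u x} = {w}"
    "B2 = insert w B1" using step(2) unfolding psd_force_step_def by blast
  have finV: "finite V" using g graph_def by blast
  have finK: "finite K" using cv clique_covering_def by blast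
  have Euw: "E u w" using uw(3) by blast
  obtain D where D: "D \<in> K" "u \<in> D" "w \<in> D" using cv Euw unfolding clique_covering_def by blast
  have cl: "clique V E D" using cv D(1) unfolding clique_covering_def by blast
  have DU: "D \<notin> U" using U(2) D(3) uw(2) by blast
  have Dsub: "D \<subseteq> B2"
  proof
    fix x assume xD: "x \<in> D"
    show "x \<in> B2"
    proof (rule ccontr)
      assume xn: "x \<notin> B2"
      then have xw: "x \<noteq> w" "x \<notin> B1" using uw(4) by auto
      have xV: "x \<in> V" using cl xD unfolding clique_def by blast
      have Ewx: "E w x" using clqE[OF cl D(3) xD] xw(1) by metis
      have xu: "x \<noteq> u" using uw(1) xw by blast
      have Eux: "E u x" using clqE[OF cl D(2) xD] xu by metis
      have xS: "x \<in> V - B1" using xV xw(2) by blast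
      have "(\<lambda>a b. a \<in> V - B1 \<and> b \<in> V - B1 \<and> E a b) w x" using xS uw(2) Ewx by blast
      then have "(\<lambda>a b. a \<in> V - B1 \<and> b \<in> V - B1 \<and> E a b)\<^sup>*\<^sup>* w x" by (rule r_into_rtranclp)
      then have "x \<in> component_in E (V - B1) w"
        unfolding component_in_def using xS by blast
      then have "x \<in> {x \<in> component_in E (V - B1) w. E u x}" using Eux by blast
      then show False using uw(3) xw(1) by blast
    qed
  qed
  have finU: "finite U" using U(1) finK finite_subset by blast
  have finB1: "finite B1" using finV U(4) finite_subset by blast
  have "card B2 \<le> card B1 + 1"
    using uw(4) uw(2) card_insert_disjoint[OF finB1] by simp
  also have "\<dots> \<le> card B + card U + 1" using U(3) by simp
  also have "\<dots> = card B + card (insert D U)" using DU finU by simp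
  finally have c2: "card B2 \<le> card B + card (insert D U)" .
  show ?case
  proof (intro exI[of _ "insert D U"] conjI)
    show "insert D U \<subseteq> K" using U(1) D(1) by blast
    show "\<Union>(insert D U) \<subseteq> B2" using Dsub U(2) uw(4) by blast
    show "card B2 \<le> card B + card (insert D U)" by (rule c2)
    show "B2 \<subseteq> V" using U(4) uw(2,4) by blast
  qed
qed

lemma lb:
  assumes g: "graph V E" and cv: "clique_covering V E K" and fs: "psd_forcing_set V E B"
  shows "card V \<le> card B + card K"
proof -
  have BV: "B \<subseteq> V" and r: "(psd_force_step V E)\<^sup>*\<^sup>* B V" using fs unfolding psd_forcing_set_def by auto
  obtain U where U: "U \<subseteq> K" "card V \<le> card B + card U" using lb_run[OF g cv r BV] by blast
  have "finite K" using cv unfolding clique_covering_def by blast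
  then have "card U \<le> card K" using U(1) card_mono by blast
  then show ?thesis using U(2) by simp
qed




context CCL begin

lemma Inv0: "Inv {}"
  unfolding Inv_def I1_def I2_def
proof (intro conjI ballI impI)
  fix v assume "v \<in> K - {}" "Nn v"
  then obtain D1 D2 where "Hadj v D1" "D1 \<noteq> D2" using nbr2[of v] by blast
  then show "\<exists>e\<in>K - {}. Hadj v e" using HK by blast
qed auto

lemma ub: "\<exists>B. psd_forcing_set V E B \<and> card B = card V - card K"
proof -
  obtain cs where cs: "distinct cs" "set cs = K" "\<forall>i<length cs. placeable (set (take i cs)) (cs!i)"
    using Order[OF Inv0] by auto
  define l where "l = length cs"
  have lK: "l = card K" using cs distinct_card l_def by metis
  have csK: "i < l \<Longrightarrow> cs!i \<in> K" for i using cs(2) l_def nth_mem by blast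
  have "\<forall>i. \<exists>p. i < l \<longrightarrow> (fst p \<in> cs!i \<and> snd p \<in> cs!i \<and> fst p \<noteq> snd p \<and> snd p \<notin> \<Union>(set (take i cs)) \<and>
      (\<forall>D\<in>K. fst p \<in> D \<longrightarrow> D = cs!i \<or> D \<in> set (take i cs)))"
  proof
    fix i
    show "\<exists>p. i < l \<longrightarrow> (fst p \<in> cs!i \<and> snd p \<in> cs!i \<and> fst p \<noteq> snd p \<and> snd p \<notin> \<Union>(set (take i cs)) \<and>
      (\<forall>D\<in>K. fst p \<in> D \<longrightarrow> D = cs!i \<or> D \<in> set (take i cs)))"
    proof (cases "i < l")
      case True
      then have "placeable (set (take i cs)) (cs!i)" using cs(3) l_def by blast
      then obtain u w where "u \<in> cs!i \<and> w \<in> cs!i \<and> u \<noteq> w \<and> w \<notin> \<Union>(set (take i cs)) \<and>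
      (\<forall>D\<in>K. u \<in> D \<longrightarrow> D = cs!i \<or> D \<in> set (take i cs))" unfolding placeable_def by blast
      then show ?thesis by (intro exI[of _ "(u, w)"]) simp
    qed simp
  qed
  then obtain g where g0: "\<forall>i. i < l \<longrightarrow> (fst (g i) \<in> cs!i \<and> snd (g i) \<in> cs!i \<and> fst (g i) \<noteq> snd (g i)
      \<and> snd (g i) \<notin> \<Union>(set (take i cs)) \<and> (\<forall>D\<in>K. fst (g i) \<in> D \<longrightarrow> D = cs!i \<or> D \<in> set (take i cs)))"
    by (rule choice[THEN exE])
  define U where "U i = fst (g i)" for i
  define W where "W i = snd (g i)" for i
  have gi: "U i \<in> cs!i \<and> W i \<in> cs!i \<and> U i \<noteq> W i
      \<and> W i \<notin> \<Union>(set (take i cs)) \<and> (\<forall>D\<in>K. U i \<in> D \<longrightarrow> D = cs!i \<or> D \<in> set (take i cs))"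
    if "i < l" for i unfolding U_def W_def using g0 that by blast
  have U1: "i < l \<Longrightarrow> U i \<in> cs!i" for i using gi by blast
  have W1: "i < l \<Longrightarrow> W i \<in> cs!i" for i using gi by blast
  have UW: "i < l \<Longrightarrow> U i \<noteq> W i" for i using gi by blast
  have W2: "i < l \<Longrightarrow> W i \<notin> \<Union>(set (take i cs))" for i using gi by blast
  have U2: "i < l \<Longrightarrow> D \<in> K \<Longrightarrow> U i \<in> D \<Longrightarrow> D = cs!i \<or> D \<in> set (take i cs)" for i D
    using gi by blast
  have intake: "i < m \<Longrightarrow> m < l \<Longrightarrow> cs!i \<in> set (take m cs)" for i m
  proof -
    assume "i < m" "m < l"
    then have "take m cs ! i = cs ! i" "i < length (take m cs)" using l_def by auto
    then show ?thesis by (metis nth_mem)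
  qed
  have Wnot: "i < m \<Longrightarrow> m < l \<Longrightarrow> W m \<notin> cs!i" for i m
    using W2[of m] intake[of i m] by blast
  have WV: "i < l \<Longrightarrow> W i \<in> V" for i using W1 csK subV by blast
  have UV: "i < l \<Longrightarrow> U i \<in> V" for i using U1 csK subV by blast
  have Winj: "inj_on W {0..<l}"
  proof (rule inj_onI)
    fix i m assume im: "i \<in> {0..<l}" "m \<in> {0..<l}" "W i = W m"
    show "i = m"
    proof (rule ccontr)
      assume "i \<noteq> m"
      then consider "i < m" | "m < i" by linarith
      then show False
      proof cases
        case 1 then show False using Wnot[of i m] W1[of i] im by auto
      next
        case 2 then show False using Wnot[of m i] W1[of m] im by auto
      qed
    qed
  qed
  define Bj where "Bj j = V - W ` {j..<l}" for j
  have stp: "psd_force_step V E (Bj j) (Bj (Suc j))" if j: "j < l" for j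
  proof -
    have uB: "U j \<in> Bj j"
    proof -
      have "U j \<notin> W ` {j..<l}"
      proof
        assume "U j \<in> W ` {j..<l}"
        then obtain m where m: "m \<in> {j..<l}" "U j = W m" by blast
        show False
        proof (cases "m = j")
          case True then show False using UW j m by simp
        next
          case False
          then have "j < m" using m by simp
          then show False using Wnot[of j m] m U1[OF j] by auto
        qed
      qed
      then show ?thesis using UV j Bj_def by blast
    qed
    have wB: "W j \<in> V - Bj j" using WV j Bj_def by auto
    have ins: "Bj (Suc j) = insert (W j) (Bj j)"
    proof -
      have e: "{j..<l} = insert j {Suc j..<l}" using j by auto
      have "W j \<notin> W ` {Suc j..<l}"
      proof
        assume "W j \<in> W ` {Suc j..<l}"
        then obtain m where "m \<in> {Suc j..<l}" "W j = W m" by blast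
        then show False using Wnot[of j m] W1[OF j] by auto
      qed
      then show ?thesis unfolding Bj_def e using WV[OF j] by auto
    qed
    have seteq: "{x \<in> component_in E (V - Bj j) (W j). E (U j) x} = {W j}"
    proof
      show "{x \<in> component_in E (V - Bj j) (W j). E (U j) x} \<subseteq> {W j}"
      proof
        fix x assume x: "x \<in> {x \<in> component_in E (V - Bj j) (W j). E (U j) x}"
        then have xS: "x \<in> V - Bj j" and Ex: "E (U j) x" unfolding component_in_def by auto
        then have "x \<in> W ` {j..<l}" unfolding Bj_def by blast
        then obtain m where m: "j \<le> m" "m < l" "x = W m" by auto
        obtain D where D: "D \<in> K" "U j \<in> D" "x \<in> D" using edgeK[OF Ex] by blast
        have "D = cs!j \<or> D \<in> set (take j cs)" using U2[OF j D(1,2)] .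
        then show "x \<in> {W j}"
        proof
          assume Dj: "D = cs!j"
          show ?thesis
          proof (cases "m = j")
            case True then show ?thesis using m by simp
          next
            case False
            then have "j < m" using m by simp
            then show ?thesis using Wnot[of j m] m D Dj by auto
          qed
        next
          assume "D \<in> set (take j cs)"
          then obtain i where i: "i < length (take j cs)" "D = take j cs ! i" by (metis in_set_conv_nth)
          then have "i < j" "D = cs ! i" by auto
          then show ?thesis using Wnot[of i m] m D by auto
        qed
      qed
      show "{W j} \<subseteq> {x \<in> component_in E (V - Bj j) (W j). E (U j) x}"
      proof -
        have "W j \<in> component_in E (V - Bj j) (W j)" using wB unfolding component_in_def by simp
        moreover have "E (U j) (W j)" using cliqE[OF csK[OF j] U1[OF j] W1[OF j] UW[OF j]] .
        ultimately show ?thesis by blast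
      qed
    qed
    show ?thesis unfolding psd_force_step_def
      using uB wB seteq ins by blast
  qed
  have run: "j \<le> l \<Longrightarrow> (psd_force_step V E)\<^sup>*\<^sup>* (Bj 0) (Bj j)" for j
  proof (induction j)
    case 0 then show ?case by simp
  next
    case (Suc j)
    then have "(psd_force_step V E)\<^sup>*\<^sup>* (Bj 0) (Bj j)" by simp
    moreover have "psd_force_step V E (Bj j) (Bj (Suc j))" using stp Suc.prems by simp
    ultimately show ?case by (rule rtranclp.rtrancl_into_rtrancl)
  qed
  have "Bj l = V" unfolding Bj_def by simp
  then have fs: "psd_forcing_set V E (Bj 0)" using run[of l] unfolding psd_forcing_set_def Bj_def by auto
  have sub: "W ` {0..<l} \<subseteq> V" using WV by auto
  have "card (W ` {0..<l}) = l" using card_image[OF Winj] by simp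
  then have "card (Bj 0) = card V - l" unfolding Bj_def using card_Diff_subset[OF finite_imageI[OF finite_atLeastLessThan] sub] by simp
  then show ?thesis using fs lK by blast
qed

end




theorem mainTheorem7:
  fixes V :: "'a set" and E :: "'a \<Rightarrow> 'a \<Rightarrow> bool" and \<K> :: "'a set set"
  assumes "graph V E"
    and "min_max_clique_covering V E \<K>"
    and "simple_intersection \<K>"
    and "\<forall>k\<ge>4. \<not> has_induced_cycle (ccg_vertices \<K>) (ccg_edge \<K>) k"
  shows "Zplus V E = card V - cc V E"
proof -
  have cv: "clique_covering V E \<K>" and ccK: "card \<K> = cc V E" and mx: "\<forall>C\<in>\<K>. maximal_clique V E C"
    using assms(2) unfolding min_max_clique_covering_def by auto
  have mc: "card \<K> \<le> card K'" if "clique_covering V E K'" for K'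
  proof -
    have "cc V E \<le> card K'" unfolding cc_def by (rule Least_le) (use that in blast)
    then show ?thesis using ccK by simp
  qed
  have nc: False if "distinct zs" "4 \<le> length zs" "set zs \<subseteq> \<K>"
      "\<forall>i<length zs. zs!i \<inter> zs!(Suc i mod length zs) \<noteq> {}" for zs
    using cycle_to_ccg[OF that] assms(4) that(2) by blast
  interpret CCL V E \<K>
    using assms(1,3) cv mx mc nc by unfold_locales blast+
  have exB: "\<exists>k. \<exists>B. psd_forcing_set V E B \<and> card B = k"
    by (intro exI[of _ "card V"] exI[of _ V]) (simp add: psd_forcing_set_def)
  obtain B where B: "psd_forcing_set V E B" "card B = Zplus V E"
    using LeastI_ex[OF exB] unfolding Zplus_def by blast
  have "card V \<le> card B + card \<K>" by (rule lb[OF assms(1) cv B(1)])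
  then have ge: "card V - cc V E \<le> Zplus V E" using B(2) ccK by simp
  obtain B0 where B0: "psd_forcing_set V E B0" "card B0 = card V - card \<K>" using ub by blast
  have "Zplus V E \<le> card B0" unfolding Zplus_def by (rule Least_le) (use B0 in blast)
  then show ?thesis using ge B0(2) ccK by simp
qed



end
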